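(* Let $K$ be a subdivision of the standard $n$-simplex, i.e. an ordered, locally finite simplicial complex with $|K|=\Delta^n\subset\mathbb{A}^n$ such that every simplex of $K$ is affinely contained in a simplex of $\Delta^n$. Then there exists a smooth homotopy $\{h_t:\mathbb{A}^n\to\mathbb{A}^n\}_{t\in[0,1]}$ such that (i) $h_0=\mathrm{id}$; (ii) for every $t$, $h_t$ maps each closed simplex of $K$ into itself; (iii) each closed simplex of $K$ has an open neighborhood in $\mathbb{A}^n$ which $h_1$ maps into that same simplex.
   Context: $\mathbb{A}^n=\{x\in\mathbb{R}^{n+1}:\sum_ix_i=1\}$, an affine space of dimension $n$, and $\Delta^n\subset\mathbb{A}^n$ is the closed standard simplex (all coordinates nonnegative). A smooth homotopy means a smooth map $\mathbb{A}^n\times[0,1]\to\mathbb{A}^n$ (equivalently, after reparametrization, smooth in $t$). *)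

theory Defs
  imports "HOL-Analysis.Analysis"
begin

text \<open>The affine space A^n inside R^(n+1); the index type 'm has n+1 elements.\<close>
definition affine_space_A :: "(real^'m) set" where
  "affine_space_A = {x. (\<Sum>i\<in>UNIV. x $ i) = 1}"

definition std_simplex :: "(real^'m) set" where
  "std_simplex = {x. (\<Sum>i\<in>UNIV. x $ i) = 1 \<and> (\<forall>i. 0 \<le> x $ i)}"

text \<open>A locally finite (geometric) simplicial complex: the library notion
  simplicial_complex with finiteness replaced by local finiteness.\<close>
definition locally_finite_simplicial_complex :: "'a::euclidean_space set set \<Rightarrow> bool" where
  "locally_finite_simplicial_complex K \<longleftrightarrow>
     (\<forall>S\<in>K. \<exists>k. k simplex S) \<and>
     (\<forall>F S. S \<in> K \<and> F face_of S \<longrightarrow> F \<in> K) \<and>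
     (\<forall>S S'. S \<in> K \<and> S' \<in> K \<longrightarrow> (S \<inter> S') face_of S) \<and>
     (\<forall>x\<in>\<Union>K. \<exists>U. open U \<and> x \<in> U \<and> finite {S\<in>K. S \<inter> U \<noteq> {}})"

text \<open>C^infinity maps on a Euclidean space: f is differentiable everywhere and
  all directional derivatives x |-> Df(x) v are again C^infinity
  (coinductive/greatest-fixpoint formulation).\<close>
definition smooth_map :: "('a::euclidean_space \<Rightarrow> 'b::real_normed_vector) \<Rightarrow> bool" where
  "smooth_map f \<longleftrightarrow>
     (\<exists>S. f \<in> S \<and>
        (\<forall>g\<in>S. (\<forall>x. g differentiable (at x)) \<and>
                (\<forall>v. (\<lambda>x. frechet_derivative g (at x) v) \<in> S)))"

end

theory Submission
  imports Defs
begin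

definition G :: "nat \<Rightarrow> real \<Rightarrow> real" where
  "G k s = (if s > 0 then exp (- inverse s) * inverse s ^ k else 0)"

lemma G_nonneg: "0 \<le> G k s" by (simp add: G_def)
lemma G_pos: "s > 0 \<Longrightarrow> 0 < G k s" by (simp add: G_def)
lemma G_zero: "s \<le> 0 \<Longrightarrow> G k s = 0" by (simp add: G_def)

lemma G_tendsto0: "(G k \<longlongrightarrow> 0) (at (0::real))"
proof -
  have r: "(G k \<longlongrightarrow> 0) (at_right (0::real))"
  proof -
    have "(((\<lambda>x. x ^ k / exp x) \<circ> inverse) \<longlongrightarrow> (0::real)) (at_right (0::real))"
      unfolding comp_def
      by (rule filterlim_compose[OF tendsto_power_div_exp_0 filterlim_inverse_at_top_right])
    moreover have "eventually (\<lambda>s. ((\<lambda>x. x ^ k / exp x) \<circ> inverse) s = G k s) (at_right (0::real))"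
      using eventually_at_right_less[of 0]
      by eventually_elim (simp add: G_def exp_minus field_simps)
    ultimately show ?thesis by (rule Lim_transform_eventually)
  qed
  have l: "(G k \<longlongrightarrow> 0) (at_left (0::real))"
  proof -
    have "eventually (\<lambda>s. 0 = G k s) (at_left (0::real))"
      proof -
      have "eventually (\<lambda>s. s\<in>{-1<..<0}) (at_left (0::real))" by (rule eventually_at_left_real) simp
      then show ?thesis by eventually_elim (simp add: G_def)
    qed
    then show ?thesis by (rule Lim_transform_eventually[OF tendsto_const])
  qed
  show ?thesis using l r by (simp add: filterlim_at_split)
qed

lemma G_e: "(s::real) > 0 \<Longrightarrow> ((\<lambda>s. exp (- inverse s)) has_real_derivative exp(-inverse s) * (inverse s)^2) (at s)"
  by (rule derivative_eq_intros refl | simp add: power2_eq_square)+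
lemma G_p: "(s::real) > 0 \<Longrightarrow> ((\<lambda>s. inverse s ^ k) has_real_derivative - real k * inverse s ^ (k+1)) (at s)"
  apply (rule derivative_eq_intros refl | simp add: power2_eq_square)+
  by (cases k) auto

lemma G_deriv: "(G k has_real_derivative (G (k+2) s - real k * G (k+1) s)) (at s)"
proof (cases "s > 0")
  case True
  have d: "((\<lambda>s. exp (- inverse s) * inverse s ^ k) has_real_derivative
          (G (k+2) s - real k * G (k+1) s)) (at s)"
  proof -
    have "((\<lambda>s. exp (- inverse s) * inverse s ^ k) has_real_derivative 
       exp(-inverse s) * (inverse s)^2 * inverse s ^ k + (- real k * inverse s ^ (k+1)) * exp (- inverse s)) (at s)"
      by (rule DERIV_mult[OF G_e[OF True] G_p[OF True]])
    moreover have "exp(-inverse s) * (inverse s)^2 * inverse s ^ k + (- real k * inverse s ^ (k+1)) * exp (- inverse s)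
       = G (k+2) s - real k * G (k+1) s"
      using True by (simp add: G_def power_add algebra_simps power2_eq_square)
    ultimately show ?thesis by simp
  qed
  show ?thesis
    apply (rule has_field_derivative_transform_within_open[OF d, of "{0<..}"])
    using True by (auto simp: G_def)
next
  case False
  show ?thesis
  proof (cases "s < 0")
    case True
    have d: "((\<lambda>s. 0) has_real_derivative (G (k+2) s - real k * G (k+1) s)) (at s)"
      using True by (simp add: G_def)
    show ?thesis
      apply (rule has_field_derivative_transform_within_open[OF d, of "{..<0}"])
      using True by (auto simp: G_def)
  next
    case False
    then have s: "s = 0" using \<open>\<not> s > 0\<close> by simp
    have "((\<lambda>y. (G k y - G k 0) / (y - 0)) \<longlongrightarrow> 0) (at (0::real))"
    proof -
      have "\<forall>y. (G k y - G k 0) / (y - 0) = G (k+1) y"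
        by (auto simp: G_def field_simps)
      then show ?thesis using G_tendsto0[of "k+1"] by simp
    qed
    then show ?thesis using s by (simp add: has_field_derivative_iff G_def)
  qed
qed

inductive_set sm :: "('a::euclidean_space \<Rightarrow> real) set" where
  sm_const: "(\<lambda>x. c) \<in> sm"
| sm_lin: "linear l \<Longrightarrow> l \<in> sm"
| sm_add: "f \<in> sm \<Longrightarrow> g \<in> sm \<Longrightarrow> (\<lambda>x. f x + g x) \<in> sm"
| sm_mult: "f \<in> sm \<Longrightarrow> g \<in> sm \<Longrightarrow> (\<lambda>x. f x * g x) \<in> sm"
| sm_G: "f \<in> sm \<Longrightarrow> (\<lambda>x. G k (f x)) \<in> sm"
| sm_inv: "f \<in> sm \<Longrightarrow> (\<forall>x. f x \<noteq> 0) \<Longrightarrow> (\<lambda>x. inverse (f x)) \<in> sm"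

lemma sm_scale: "f \<in> sm \<Longrightarrow> (\<lambda>x. c * f x) \<in> sm"
  using sm_mult[OF sm_const] .
lemma sm_diff: "f \<in> sm \<Longrightarrow> g \<in> sm \<Longrightarrow> (\<lambda>x. f x - g x) \<in> sm"
  using sm_add[OF _ sm_scale[of g "-1"]] by simp
lemma sm_sum: "finite A \<Longrightarrow> (\<And>i. i \<in> A \<Longrightarrow> f i \<in> sm) \<Longrightarrow> (\<lambda>x. \<Sum>i\<in>A. f i x) \<in> sm"
proof (induction A rule: finite_induct)
  case empty then show ?case using sm_const[of 0] by simp
next
  case (insert a A) then show ?case using sm_add[of "f a" "\<lambda>x. \<Sum>i\<in>A. f i x"] by simp
qed

lemma sm_deriv:
  assumes "f \<in> sm"
  shows "\<exists>D. (\<forall>x. (f has_derivative D x) (at x)) \<and> (\<forall>v. (\<lambda>x. D x v) \<in> sm)"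
  using assms
proof induction
  case (sm_const c)
  show ?case by (rule exI[of _ "\<lambda>x v. 0"]) (auto intro: sm.sm_const)
next
  case (sm_lin l)
  show ?case
    by (rule exI[of _ "\<lambda>x. l"]) (auto intro: sm.sm_const linear_imp_has_derivative sm_lin)
next
  case (sm_add f g)
  then obtain Df Dg where f: "\<forall>x. (f has_derivative Df x) (at x)" "\<forall>v. (\<lambda>x. Df x v) \<in> sm"
    and g: "\<forall>x. (g has_derivative Dg x) (at x)" "\<forall>v. (\<lambda>x. Dg x v) \<in> sm" by blast
  show ?case
    by (rule exI[of _ "\<lambda>x v. Df x v + Dg x v"]) (use f g in \<open>auto intro: has_derivative_add sm.sm_add\<close>)
next
  case (sm_mult f g)
  then obtain Df Dg where f: "\<forall>x. (f has_derivative Df x) (at x)" "\<forall>v. (\<lambda>x. Df x v) \<in> sm"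
    and g: "\<forall>x. (g has_derivative Dg x) (at x)" "\<forall>v. (\<lambda>x. Dg x v) \<in> sm" by blast
  show ?case
    by (rule exI[of _ "\<lambda>x v. f x * Dg x v + Df x v * g x"])
       (use f g sm_mult.hyps in \<open>auto intro!: has_derivative_mult sm.sm_add sm.sm_mult\<close>)
next
  case (sm_G f k)
  then obtain Df where f: "\<forall>x. (f has_derivative Df x) (at x)" "\<forall>v. (\<lambda>x. Df x v) \<in> sm" by blast
  have "((\<lambda>x. G k (f x)) has_derivative (\<lambda>v. (G (k+2) (f x) - real k * G (k+1) (f x)) * Df x v)) (at x)" for x
    using has_derivative_compose[OF f(1)[rule_format, of x] G_deriv[of k "f x", unfolded has_field_derivative_def]]
    by simp
  moreover have "(\<lambda>x. (G (k+2) (f x) - real k * G (k+1) (f x)) * Df x v) \<in> sm" for v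
    by (intro sm.sm_mult sm_diff sm_scale sm.sm_G sm_G.hyps f(2)[rule_format])
  ultimately show ?case
    by (intro exI[of _ "\<lambda>x v. (G (k+2) (f x) - real k * G (k+1) (f x)) * Df x v"]) auto
next
  case (sm_inv f)
  then obtain Df where f: "\<forall>x. (f has_derivative Df x) (at x)" "\<forall>v. (\<lambda>x. Df x v) \<in> sm" by blast
  have "((\<lambda>x. inverse (f x)) has_derivative (\<lambda>v. - (inverse (f x) * Df x v * inverse (f x)))) (at x)" for x
    using Deriv.has_derivative_inverse[OF _ f(1)[rule_format, of x]] sm_inv.hyps(2) by blast
  moreover have "(\<lambda>x. - (inverse (f x) * Df x v * inverse (f x))) \<in> sm" for v
    using sm_scale[OF sm.sm_mult[OF sm.sm_mult[OF sm.sm_inv[OF sm_inv.hyps(1,2)] f(2)[rule_format, of v]]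
      sm.sm_inv[OF sm_inv.hyps(1,2)]], of "-1"] by simp
  ultimately show ?case
    by (intro exI[of _ "\<lambda>x v. - (inverse (f x) * Df x v * inverse (f x))"]) auto
qed

definition smv :: "('a::euclidean_space \<Rightarrow> 'b::euclidean_space) set" where
  "smv = {F. \<forall>b\<in>Basis. (\<lambda>x. F x \<bullet> b) \<in> sm}"

lemma smv_deriv:
  assumes "F \<in> smv"
  shows "\<exists>D. (\<forall>x. (F has_derivative D x) (at x)) \<and> (\<forall>v. (\<lambda>x. D x v) \<in> smv)"
proof -
  have "\<forall>b\<in>Basis. \<exists>D. (\<forall>x. ((\<lambda>x. F x \<bullet> b) has_derivative D x) (at x)) \<and> (\<forall>v. (\<lambda>x. D x v) \<in> sm)"
  proof
    fix b :: 'b assume "b \<in> Basis"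
    then have "(\<lambda>x. F x \<bullet> b) \<in> sm" using assms unfolding smv_def by blast
    then show "\<exists>D. (\<forall>x. ((\<lambda>x. F x \<bullet> b) has_derivative D x) (at x)) \<and> (\<forall>v. (\<lambda>x. D x v) \<in> sm)"
      by (rule sm_deriv)
  qed
  then have "\<exists>D. \<forall>b\<in>Basis. (\<forall>x. ((\<lambda>x. F x \<bullet> b) has_derivative D b x) (at x)) \<and> (\<forall>v. (\<lambda>x. D b x v) \<in> sm)"
    by (rule bchoice)
  then obtain D where D: "\<forall>b\<in>Basis. (\<forall>x. ((\<lambda>x. F x \<bullet> b) has_derivative D b x) (at x)) \<and> (\<forall>v. (\<lambda>x. D b x v) \<in> sm)"
    by (elim exE)
  define DD where "DD x v = (\<Sum>b\<in>Basis. D b x v *\<^sub>R b)" for x v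
  have comp: "DD x v \<bullet> b = D b x v" if "b \<in> Basis" for x v b
    unfolding DD_def using that by (simp add: inner_sum_left inner_Basis if_distrib[of "\<lambda>y. D _ x v * y"] sum.delta' cong: if_cong)
  have "(F has_derivative DD x) (at x)" for x
  proof (rule has_derivative_componentwise_within[THEN iffD2], intro ballI)
    fix b :: 'b assume b: "b \<in> Basis"
    have "((\<lambda>x. F x \<bullet> b) has_derivative D b x) (at x)" using D b by blast
    moreover have "(\<lambda>v. DD x v \<bullet> b) = D b x" using comp[OF b] by auto
    ultimately show "((\<lambda>x. F x \<bullet> b) has_derivative (\<lambda>v. DD x v \<bullet> b)) (at x)" by simp
  qed
  moreover have "(\<lambda>x. DD x v) \<in> smv" for v
    unfolding smv_def
  proof (intro CollectI ballI)
    fix b :: 'b assume b: "b \<in> Basis"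
    have "(\<lambda>x. DD x v \<bullet> b) = (\<lambda>x. D b x v)" using comp[OF b] by simp
    then show "(\<lambda>x. DD x v \<bullet> b) \<in> sm" using D b by simp
  qed
  ultimately show ?thesis by blast
qed


lemma smv_smooth: "F \<in> smv \<Longrightarrow> smooth_map F"
  unfolding smooth_map_def
proof (rule exI[of _ smv], intro conjI ballI allI)
  fix g :: "'a \<Rightarrow> 'b" and x v assume "g \<in> smv"
  from smv_deriv[OF this] obtain D where D1: "\<forall>x. (g has_derivative D x) (at x)"
     and D2: "\<forall>v. (\<lambda>x. D x v) \<in> smv"
    by (elim exE conjE)
  show "g differentiable at x" by (rule differentiableI[OF D1[rule_format]])
  have "frechet_derivative g (at x) = D x" for x by (rule frechet_derivative_at[OF D1[rule_format], symmetric])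
  then show "(\<lambda>x. frechet_derivative g (at x) v) \<in> smv" using D2 by simp
qed

definition sigma :: "real \<Rightarrow> real" where
  "sigma s = G 0 s * inverse (G 0 s + G 0 (1 - s))"

lemma sigma_den_pos: "G 0 s + G 0 (1 - s) > 0"
proof (cases "s > 0")
  case True then show ?thesis using G_pos[of s 0] G_nonneg[of 0 "1-s"] by linarith
next
  case False then show ?thesis using G_pos[of "1-s" 0] G_nonneg[of 0 s] by linarith
qed

lemma sigma_sm: "f \<in> sm \<Longrightarrow> (\<lambda>x. sigma (f x)) \<in> sm"
  unfolding sigma_def
proof (intro sm_mult sm_G sm_inv sm_add allI)
  assume f: "f \<in> sm"
  show "(\<lambda>x. 1 - f x) \<in> sm" by (rule sm_diff[OF sm_const f])
  show "G 0 (f x) + G 0 (1 - f x) \<noteq> 0" for x using sigma_den_pos[of "f x"] by simp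
qed

lemma sigma_0: "s \<le> 0 \<Longrightarrow> sigma s = 0" by (simp add: sigma_def G_zero)
lemma sigma_1: "s \<ge> 1 \<Longrightarrow> sigma s = 1"
  using sigma_den_pos[of s] by (simp add: sigma_def G_zero)
lemma sigma_nonneg: "0 \<le> sigma s"
  using sigma_den_pos[of s] G_nonneg[of 0 s] by (simp add: sigma_def)
lemma sigma_le1: "sigma s \<le> 1"
proof -
  have "G 0 s \<le> G 0 s + G 0 (1 - s)" using G_nonneg[of 0 "1-s"] by simp
  then show ?thesis using sigma_den_pos[of s] by (simp add: sigma_def field_simps)
qed

definition bump :: "real \<Rightarrow> real \<Rightarrow> 'a::euclidean_space \<Rightarrow> 'a \<Rightarrow> real" where
  "bump r1 r2 y x = sigma ((r2^2 - norm (x - y)^2) / (r2^2 - r1^2))"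

lemma bump_range: "0 \<le> bump r1 r2 y x" "bump r1 r2 y x \<le> 1"
  by (simp_all add: bump_def sigma_nonneg sigma_le1)

lemma bump_one:
  assumes "0 \<le> r1" "r1 < r2" "norm (x - y) \<le> r1"
  shows "bump r1 r2 y x = 1"
proof -
  have "norm (x - y)^2 \<le> r1^2" using assms by (simp add: power_mono)
  moreover have "r1^2 < r2^2" using assms by (simp add: power_strict_mono)
  ultimately have "(r2^2 - norm (x - y)^2) / (r2^2 - r1^2) \<ge> 1" by (simp add: field_simps)
  then show ?thesis by (simp add: bump_def sigma_1)
qed

lemma bump_pos:
  assumes "0 \<le> r1" "r1 < r2" "bump r1 r2 y x > 0"
  shows "norm (x - y) < r2"
proof (rule ccontr)
  assume "\<not> norm (x - y) < r2"
  then have "norm (x - y)^2 \<ge> r2^2" using assms by (simp add: power_mono)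
  moreover have "r1^2 < r2^2" using assms by (simp add: power_strict_mono)
  ultimately have "(r2^2 - norm (x - y)^2) / (r2^2 - r1^2) \<le> 0" by (simp add: divide_nonpos_pos)
  then show False using assms(3) by (simp add: bump_def sigma_0)
qed

lemma norm_sq_basis: "norm (z::'a::euclidean_space)^2 = (\<Sum>b\<in>Basis. (z \<bullet> b) * (z \<bullet> b))"
  by (simp add: power2_norm_eq_inner euclidean_inner[of z z])

lemma bump_sm:
  assumes L: "\<And>b. b \<in> Basis \<Longrightarrow> (\<lambda>p. L p \<bullet> b) \<in> sm"
  shows "(\<lambda>p. bump r1 r2 y (L p)) \<in> sm"
proof -
  have eq: "(\<lambda>p. bump r1 r2 y (L p)) = (\<lambda>p. sigma (inverse (r2^2 - r1^2) *
     (r2^2 - (\<Sum>b\<in>Basis. (L p \<bullet> b - y \<bullet> b) * (L p \<bullet> b - y \<bullet> b)))))"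
    by (simp add: bump_def norm_sq_basis[of "L _ - y"] inner_diff_left divide_inverse mult.commute)
  show ?thesis unfolding eq
    by (intro sigma_sm sm_scale sm_diff sm_const sm_sum finite_Basis sm_mult L)
qed

fun gl :: "('a \<Rightarrow> 'a \<Rightarrow> real) \<Rightarrow> 'a list \<Rightarrow> 'a \<Rightarrow> 'a::real_vector" where
  "gl B [] x = x"
| "gl B (y # ys) x = B y x *\<^sub>R y + (1 - B y x) *\<^sub>R gl B ys x"

lemma gl_conv:
  assumes "convex C"
  shows "(\<forall>y\<in>set ys. 0 \<le> B y x \<and> B y x \<le> 1) \<Longrightarrow> (\<forall>y\<in>set ys. 0 < B y x \<longrightarrow> y \<in> C)
     \<Longrightarrow> (x \<in> C \<or> (\<exists>y\<in>set ys. B y x = 1)) \<Longrightarrow> gl B ys x \<in> C"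
proof (induction ys)
  case Nil then show ?case by simp
next
  case (Cons y ys)
  show ?case
  proof (cases "B y x = 0")
    case True then show ?thesis using Cons by auto
  next
    case False
    then have pos: "0 < B y x" and le: "B y x \<le> 1" using Cons.prems(1) by auto
    then have yC: "y \<in> C" using Cons.prems(2) by auto
    show ?thesis
    proof (cases "B y x = 1")
      case True then show ?thesis using yC by simp
    next
      case False
      then have "gl B ys x \<in> C" using Cons by auto
      then show ?thesis using yC convexD[OF assms yC, of "gl B ys x" "B y x" "1 - B y x"] pos le by simp
    qed
  qed
qed

lemma gl_sm:
  assumes "\<forall>y\<in>set ys. (\<lambda>p. B y (L p)) \<in> sm" "(\<lambda>p. L p \<bullet> b) \<in> sm"
  shows "(\<lambda>p. gl B ys (L p) \<bullet> b) \<in> sm"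
  using assms(1)
proof (induction ys)
  case Nil then show ?case using assms(2) by simp
next
  case (Cons y ys)
  have eq: "(\<lambda>p. gl B (y # ys) (L p) \<bullet> b) =
     (\<lambda>p. B y (L p) * (y \<bullet> b) + (1 - B y (L p)) * (gl B ys (L p) \<bullet> b))"
    by (simp add: inner_add_left)
  show ?case unfolding eq using Cons
    by (intro sm_add sm_mult sm_diff sm_const) auto
qed

lemma lfsc_closed: "locally_finite_simplicial_complex K \<Longrightarrow> S \<in> K \<Longrightarrow> closed S"
  unfolding locally_finite_simplicial_complex_def using closed_simplex by blast
lemma lfsc_convex: "locally_finite_simplicial_complex K \<Longrightarrow> S \<in> K \<Longrightarrow> convex S"
  unfolding locally_finite_simplicial_complex_def using convex_simplex by blast

lemma delta_exists:
  assumes K: "locally_finite_simplicial_complex K" and y: "y \<in> \<Union>K"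
  shows "\<exists>d>0. \<forall>S\<in>K. y \<notin> S \<longrightarrow> (\<forall>z\<in>S. d \<le> dist y z)"
proof -
  obtain U where U: "open U" "y \<in> U" "finite {S\<in>K. S \<inter> U \<noteq> {}}"
    using K y unfolding locally_finite_simplicial_complex_def by blast
  obtain e where e: "e > 0" "ball y e \<subseteq> U" using U open_contains_ball by blast
  define F where "F = {S\<in>K. S \<inter> U \<noteq> {} \<and> y \<notin> S}"
  have "finite F" using U(3) by (rule finite_subset[rotated]) (auto simp: F_def)
  moreover have "\<And>S. S \<in> F \<Longrightarrow> closed S" using lfsc_closed[OF K] by (auto simp: F_def)
  ultimately have "closed (\<Union>F)" by (simp add: closed_Union)
  moreover have "y \<notin> \<Union>F" by (auto simp: F_def)
  ultimately have "open (- \<Union>F)" "y \<in> - \<Union>F" by (auto simp: open_Compl)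
  then obtain e' where e': "e' > 0" "ball y e' \<subseteq> - \<Union>F"
    using open_contains_ball by blast
  show ?thesis
  proof (intro exI[of _ "min e e'"] conjI ballI impI)
    show "0 < min e e'" using e e' by simp
    fix S z assume S: "S \<in> K" "y \<notin> S" and z: "z \<in> S"
    show "min e e' \<le> dist y z"
    proof (cases "S \<inter> U = {}")
      case True
      then have "z \<notin> ball y e" using e z by auto
      then show ?thesis by (simp add: dist_commute)
    next
      case False
      then have "S \<in> F" using S by (simp add: F_def)
      then have "z \<notin> ball y e'" using e' z by auto
      then show ?thesis by (simp add: dist_commute)
    qed
  qed
qed

lemma compact_std_simplex: "compact (std_simplex :: (real^'m) set)"
proof -
  have cl: "closed (std_simplex :: (real^'m) set)"
    unfolding std_simplex_def
    by (intro closed_Collect_conj closed_Collect_all closed_Collect_eq closed_Collect_le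
        continuous_intros) 
  have "std_simplex \<subseteq> cbox (0::real^'m) 1"
  proof
    fix x :: "real^'m" assume x: "x \<in> std_simplex"
    have "x $ i \<le> 1" for i
    proof -
      have "x $ i \<le> (\<Sum>j\<in>UNIV. x $ j)"
        by (rule member_le_sum) (use x in \<open>auto simp: std_simplex_def\<close>)
      then show ?thesis using x by (simp add: std_simplex_def)
    qed
    then show "x \<in> cbox 0 1" using x by (simp add: mem_box_cart std_simplex_def)
  qed
  then have "std_simplex = cbox (0::real^'m) 1 \<inter> std_simplex" by blast
  then show ?thesis using compact_Int_closed[OF compact_cbox cl] by metis
qed

lemma std_sub_A: "std_simplex \<subseteq> affine_space_A"
  by (auto simp: std_simplex_def affine_space_A_def)

lemma convex_A: "convex (affine_space_A :: (real^'m) set)"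
  unfolding convex_def affine_space_A_def
  by (simp add: sum.distrib sum_distrib_left[symmetric])

theorem mainTheorem13:
  fixes K :: "(real^'m) set set"
  assumes "locally_finite_simplicial_complex K"
    and "\<Union>K = std_simplex"
  shows "\<exists>h :: real \<Rightarrow> real^'m \<Rightarrow> real^'m.
           smooth_map (\<lambda>p :: (real^'m) \<times> real. h (snd p) (fst p)) \<and>
           (\<forall>t\<in>{0..1}. h t ` affine_space_A \<subseteq> affine_space_A) \<and>
           (\<forall>x\<in>affine_space_A. h 0 x = x) \<and>
           (\<forall>t\<in>{0..1}. \<forall>S\<in>K. h t ` S \<subseteq> S) \<and>
           (\<forall>S\<in>K. \<exists>U. open U \<and> S \<subseteq> U \<and> h 1 ` (U \<inter> affine_space_A) \<subseteq> S)"
proof -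
  note K = assms(1)
  have "\<forall>y\<in>std_simplex. \<exists>d. d > 0 \<and> (\<forall>S\<in>K. y \<notin> S \<longrightarrow> (\<forall>z\<in>S. d \<le> dist y z))"
    using delta_exists[OF K] assms(2) by auto
  then obtain \<delta> where \<delta>: "\<And>y. y \<in> std_simplex \<Longrightarrow> \<delta> y > 0"
     "\<And>y S z. y \<in> std_simplex \<Longrightarrow> S \<in> K \<Longrightarrow> y \<notin> S \<Longrightarrow> z \<in> S \<Longrightarrow> \<delta> y \<le> dist y z"
    by metis
  obtain Y where Y: "Y \<subseteq> std_simplex" "finite Y" "std_simplex \<subseteq> (\<Union>y\<in>Y. ball y (\<delta> y / 4))"
  proof (rule compactE_image[OF compact_std_simplex, of std_simplex "\<lambda>y. ball y (\<delta> y / 4)"])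
    show "std_simplex \<subseteq> (\<Union>y\<in>std_simplex. ball y (\<delta> y / 4))" using \<delta>(1) by force
  qed auto
  obtain ys where ys: "set ys = Y" using finite_list[OF Y(2)] by blast
  define \<epsilon> where "\<epsilon> = Min (insert 1 ((\<lambda>y. \<delta> y / 4) ` Y))"
  have \<epsilon>pos: "\<epsilon> > 0" unfolding \<epsilon>_def using Y \<delta>(1) by (auto simp: Min_gr_iff)
  have \<epsilon>le: "\<epsilon> \<le> \<delta> y / 4" if "y \<in> Y" for y unfolding \<epsilon>_def by (rule Min_le) (use Y(2) that in auto)
  define B where "B y x = bump (\<delta> y / 2) (3 * \<delta> y / 4) y x" for y x :: "real^'m"
  define g where "g = gl B ys"
  define h where "h t x = (1 - t) *\<^sub>R x + t *\<^sub>R g x" for t :: real and x :: "real^'m"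
  have Brange: "\<forall>y\<in>set ys. 0 \<le> B y x \<and> B y x \<le> 1" for x by (simp add: B_def bump_range)
  have ysA: "y \<in> affine_space_A" if "y \<in> set ys" for y using that ys Y(1) std_sub_A by auto
  have gA: "g x \<in> affine_space_A" if "x \<in> affine_space_A" for x
    unfolding g_def by (rule gl_conv[OF convex_A Brange]) (use that ysA in auto)
  have key: "g x \<in> S" if S: "S \<in> K" and x: "x \<in> affine_space_A" and z: "z \<in> S" "dist x z < \<epsilon>" for S x z
    unfolding g_def
  proof (rule gl_conv[OF lfsc_convex[OF K S] Brange])
    show "\<forall>y\<in>set ys. 0 < B y x \<longrightarrow> y \<in> S"
    proof (intro ballI impI)
      fix y assume y: "y \<in> set ys" "0 < B y x"
      then have yY: "y \<in> Y" using ys by simp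
      then have yD: "y \<in> std_simplex" using Y(1) by auto
      have "norm (x - y) < 3 * \<delta> y / 4"
        using bump_pos[of "\<delta> y / 2" "3 * \<delta> y / 4" y x] y(2) \<delta>(1)[OF yD] by (simp add: B_def)
      show "y \<in> S"
      proof (rule ccontr)
        assume "y \<notin> S"
        then have "\<delta> y \<le> dist y z" using \<delta>(2)[OF yD S _ z(1)] by simp
        moreover have "dist y z \<le> dist y x + dist x z" by (rule dist_triangle)
        moreover have "dist y x = norm (x - y)" by (simp add: dist_norm norm_minus_commute)
        ultimately show False using \<open>norm (x - y) < 3 * \<delta> y / 4\<close> z(2) \<epsilon>le[OF yY] by linarith
      qed
    qed
    have "z \<in> std_simplex" using assms(2) S z by auto
    then obtain y where yY: "y \<in> Y" and zy: "z \<in> ball y (\<delta> y / 4)" using Y(3) by auto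
    then have yD: "y \<in> std_simplex" using Y(1) by auto
    have "norm (x - y) \<le> dist x z + dist z y" by (metis dist_norm dist_triangle)
    then have "norm (x - y) \<le> \<delta> y / 2" using zy z(2) \<epsilon>le[OF yY] by (simp add: dist_commute)
    then have "B y x = 1" unfolding B_def by (rule bump_one[rotated 2]) (use \<delta>(1)[OF yD] in auto)
    then show "x \<in> S \<or> (\<exists>y\<in>set ys. B y x = 1)" using yY ys by auto
  qed
  have hconv: "h t x \<in> C" if "convex C" "t \<in> {0..1}" "x \<in> C" "g x \<in> C" for C t x
    using convexD[OF that(1,3,4), of "1 - t" t] that(2) by (simp add: h_def)
  have smooth: "smooth_map (\<lambda>p :: (real^'m) \<times> real. h (snd p) (fst p))"
  proof (rule smv_smooth, unfold smv_def, intro CollectI ballI)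
    fix b :: "real^'m" assume b: "b \<in> Basis"
    have fstb: "(\<lambda>p :: (real^'m) \<times> real. fst p \<bullet> b) \<in> sm" for b
      by (rule sm_lin) (auto simp: linear_iff inner_add_left)
    have snds: "(\<lambda>p :: (real^'m) \<times> real. snd p) \<in> sm"
      by (rule sm_lin) (auto simp: linear_iff)
    have Bs: "\<forall>y\<in>set ys. (\<lambda>p :: (real^'m) \<times> real. B y (fst p)) \<in> sm"
      unfolding B_def by (auto intro: bump_sm fstb)
    have eq: "(\<lambda>p :: (real^'m) \<times> real. h (snd p) (fst p) \<bullet> b) =
       (\<lambda>p. (1 - snd p) * (fst p \<bullet> b) + snd p * (gl B ys (fst p) \<bullet> b))"
      by (simp add: h_def g_def inner_add_left)
    show "(\<lambda>p :: (real^'m) \<times> real. h (snd p) (fst p) \<bullet> b) \<in> sm"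
      unfolding eq by (intro sm_add sm_mult sm_diff sm_const snds fstb gl_sm Bs)
  qed
  show ?thesis
  proof (intro exI[of _ h] conjI ballI)
    show "smooth_map (\<lambda>p :: (real^'m) \<times> real. h (snd p) (fst p))" by (rule smooth)
    fix t :: real assume t: "t \<in> {0..1}"
    show "h t ` affine_space_A \<subseteq> affine_space_A"
      using hconv[OF convex_A t] gA by auto
  next
    fix x :: "real^'m" assume "x \<in> affine_space_A"
    show "h 0 x = x" by (simp add: h_def)
  next
    fix t :: real and S assume t: "t \<in> {0..1}" and S: "S \<in> K"
    have "g x \<in> S" if "x \<in> S" for x
    proof -
      have "x \<in> std_simplex" using assms(2) S that by auto
      then have "x \<in> affine_space_A" using std_sub_A by auto
      then show ?thesis using key[OF S _ that] \<epsilon>pos by simp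
    qed
    then show "h t ` S \<subseteq> S" using hconv[OF lfsc_convex[OF K S] t] by auto
  next
    fix S assume S: "S \<in> K"
    show "\<exists>U. open U \<and> S \<subseteq> U \<and> h 1 ` (U \<inter> affine_space_A) \<subseteq> S"
    proof (intro exI[of _ "\<Union>z\<in>S. ball z \<epsilon>"] conjI)
      show "open (\<Union>z\<in>S. ball z \<epsilon>)" by auto
      show "S \<subseteq> (\<Union>z\<in>S. ball z \<epsilon>)" using \<epsilon>pos by force
      show "h 1 ` ((\<Union>z\<in>S. ball z \<epsilon>) \<inter> affine_space_A) \<subseteq> S"
      proof
        fix w assume "w \<in> h 1 ` ((\<Union>z\<in>S. ball z \<epsilon>) \<inter> affine_space_A)"
        then obtain x z where x: "x \<in> affine_space_A" "z \<in> S" "dist z x < \<epsilon>" "w = h 1 x" by auto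
        then show "w \<in> S" using key[OF S x(1) x(2)] by (simp add: h_def dist_commute)
      qed
    qed
  qed
qed

end
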